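(* Let $v,u$ be integrable functions on $[0,\infty)$ and let $z_1,z_2,\gamma_1,\gamma_2$ be integrable functions on $[0,\infty)$ such that $$z_1(x)\le v(x)\le z_2(x)\quad\text{and}\quad \gamma_1(x)\le u(x)\le\gamma_2(x)\quad\text{for all }x\in[0,\infty).$$ Then for all $x>0$, $\alpha>0$, $\delta>0$, $\rho>0$ and $\beta,\lambda,\eta,k\in\mathbb{R}$, writing $A f=\,{}^{\rho}\mathcal{J}^{\alpha,\beta}_{\eta,k}f(x)$ and $D f=\,{}^{\rho}\mathcal{J}^{\delta,\lambda}_{\eta,k}f(x)$, the following hold: (a) $Du\,Az_2+D\gamma_1\,Av\ \ge\ D\gamma_1\,Az_2+Du\,Av$; (b) $Dz_1\,Au+A\gamma_2\,Dv\ \ge\ Dz_1\,A\gamma_2+Dv\,Au$; (c) $Az_2\,D\gamma_2+Av\,Du\ \ge\ Az_2\,Du+D\gamma_2\,Av$; (d) $Az_1\,D\gamma_1+Av\,Du\ \ge\ Az_1\,Du+D\gamma_1\,Av$.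
   Context: For a function $f$ on $[0,\infty)$, $x>0$, $\alpha>0$, $\rho>0$ and $\beta,\eta,k\in\mathbb{R}$, the generalized Katugampola fractional integral is $${}^{\rho}\mathcal{J}^{\alpha,\beta}_{\eta,k}f(x)=\frac{\rho^{1-\beta}x^{k}}{\Gamma(\alpha)}\int_0^x\frac{\tau^{\rho(\eta+1)-1}}{(x^\rho-\tau^\rho)^{1-\alpha}}f(\tau)\,d\tau,$$ defined whenever the integral exists; all such integrals appearing are assumed to exist. *)

theory Defs
  imports "HOL-Analysis.Analysis"
begin

definition katu_kernel :: "real \<Rightarrow> real \<Rightarrow> real \<Rightarrow> real \<Rightarrow> real \<Rightarrow> real" where
  "katu_kernel \<rho> \<alpha> \<eta> x \<tau> =
     \<tau> powr (\<rho> * (\<eta> + 1) - 1) / (x powr \<rho> - \<tau> powr \<rho>) powr (1 - \<alpha>)"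

definition katu_integrable :: "real \<Rightarrow> real \<Rightarrow> real \<Rightarrow> (real \<Rightarrow> real) \<Rightarrow> real \<Rightarrow> bool" where
  "katu_integrable \<rho> \<alpha> \<eta> f x \<longleftrightarrow>
     (\<lambda>\<tau>. katu_kernel \<rho> \<alpha> \<eta> x \<tau> * f \<tau>) integrable_on {0..x}"

text \<open>katugampola rho alpha beta eta k f x is \<rho>J^{\<alpha>,\<beta>}_{\<eta>,k} f(x).\<close>
definition katugampola ::
  "real \<Rightarrow> real \<Rightarrow> real \<Rightarrow> real \<Rightarrow> real \<Rightarrow> (real \<Rightarrow> real) \<Rightarrow> real \<Rightarrow> real" where
  "katugampola \<rho> \<alpha> \<beta> \<eta> k f x =
     \<rho> powr (1 - \<beta>) * x powr k / Gamma \<alpha> *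
     integral {0..x} (\<lambda>\<tau>. katu_kernel \<rho> \<alpha> \<eta> x \<tau> * f \<tau>)"

end

theory Submission
  imports Defs
begin

lemma katu_mono:
  fixes f g :: "real \<Rightarrow> real"
  assumes "x > 0" "a > 0" "\<rho> > 0"
    and "katu_integrable \<rho> a \<eta> f x" "katu_integrable \<rho> a \<eta> g x"
    and "\<forall>t \<ge> 0. f t \<le> g t"
  shows "katugampola \<rho> a b \<eta> k f x \<le> katugampola \<rho> a b \<eta> k g x"
proof -
  have c: "\<rho> powr (1 - b) * x powr k / Gamma a \<ge> 0"
    using assms by (simp add: Gamma_real_pos less_imp_le)
  have K: "katu_kernel \<rho> a \<eta> x t \<ge> 0" if "t \<in> {0..x}" for t
  proof -
    have "t powr \<rho> \<le> x powr \<rho>" using that assms by (simp add: powr_mono2)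
    thus ?thesis unfolding katu_kernel_def by simp
  qed
  have "integral {0..x} (\<lambda>\<tau>. katu_kernel \<rho> a \<eta> x \<tau> * f \<tau>)
        \<le> integral {0..x} (\<lambda>\<tau>. katu_kernel \<rho> a \<eta> x \<tau> * g \<tau>)"
    apply (rule integral_le)
    using assms(4,5) apply (simp_all add: katu_integrable_def)
    using K assms(6) by (simp add: mult_left_mono)
  thus ?thesis unfolding katugampola_def using c
    by (metis mult_left_mono)
qed

theorem theorem4:
  fixes v u z1 z2 \<gamma>1 \<gamma>2 :: "real \<Rightarrow> real"
    and x \<alpha> \<delta> \<rho> \<beta> lam \<eta> k :: real
  assumes int_fun: "\<forall>f \<in> {v, u, z1, z2, \<gamma>1, \<gamma>2}. f integrable_on {0..}"
    and bv: "\<forall>t \<ge> 0. z1 t \<le> v t \<and> v t \<le> z2 t"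
    and bu: "\<forall>t \<ge> 0. \<gamma>1 t \<le> u t \<and> u t \<le> \<gamma>2 t"
    and pos: "x > 0" "\<alpha> > 0" "\<delta> > 0" "\<rho> > 0"
    and exA: "\<forall>f \<in> {v, u, z1, z2, \<gamma>1, \<gamma>2}. katu_integrable \<rho> \<alpha> \<eta> f x"
    and exD: "\<forall>f \<in> {v, u, z1, z2, \<gamma>1, \<gamma>2}. katu_integrable \<rho> \<delta> \<eta> f x"
  defines "A \<equiv> \<lambda>f. katugampola \<rho> \<alpha> \<beta> \<eta> k f x"
    and "D \<equiv> \<lambda>f. katugampola \<rho> \<delta> lam \<eta> k f x"
  shows "(D u * A z2 + D \<gamma>1 * A v \<ge> D \<gamma>1 * A z2 + D u * A v) \<and>
    (D z1 * A u + A \<gamma>2 * D v \<ge> D z1 * A \<gamma>2 + D v * A u) \<and>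
    (A z2 * D \<gamma>2 + A v * D u \<ge> A z2 * D u + D \<gamma>2 * A v) \<and>
    (A z1 * D \<gamma>1 + A v * D u \<ge> A z1 * D u + D \<gamma>1 * A v)"
proof -
  have A1: "A z1 \<le> A v" "A v \<le> A z2" "A \<gamma>1 \<le> A u" "A u \<le> A \<gamma>2"
    unfolding A_def using pos exA bv bu
    by (auto intro!: katu_mono)
  have D1: "D z1 \<le> D v" "D v \<le> D z2" "D \<gamma>1 \<le> D u" "D u \<le> D \<gamma>2"
    unfolding D_def using pos exD bv bu
    by (auto intro!: katu_mono)
  have a: "(D u - D \<gamma>1) * (A z2 - A v) \<ge> 0" using A1 D1 by simp
  have b: "(D v - D z1) * (A \<gamma>2 - A u) \<ge> 0" using A1 D1 by simp
  have c: "(A z2 - A v) * (D \<gamma>2 - D u) \<ge> 0" using A1 D1 by simp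
  have d: "(A v - A z1) * (D u - D \<gamma>1) \<ge> 0" using A1 D1 by simp
  show ?thesis using a b c d by (simp add: algebra_simps)
qed

end
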